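(* Let $m\ge 2$, let $C_{n,m}$ be the number of comparisons made by Quickselect to find the $m$-th smallest element of a list of $n$ distinct numbers, and let $W_{n,m}=\frac{1}{n}C_{n,m}-1$. Let $D$ have the standard Dickman distribution. Then for all $n\ge m$, $$d_1(W_{n,m},D)\le \frac{(46m+8)\log(n/m)+54m+8}{n}.$$
   Context: Quickselect (to find the $m$-th smallest element of a list of $n\ge m$ distinct numbers): a pivot is chosen uniformly at random from the list and compared with each of the other $n-1$ elements; the elements smaller than the pivot form the left sublist and those larger form the right sublist. If the left sublist has size $m-1$, the pivot is the answer and the procedure stops; if it has size $\ge m$, the procedure recurses on the left sublist to find its $m$-th smallest element; otherwise (left size $L<m-1$) it recurses on the right sublist to find its $(m-L-1)$-th smallest element. All pivot choices are independent. $C_{n,m}$ denotes the total number of comparisons made. The standard Dickman distribution is the unique law of a non-negative random variable $D$ satisfying $D=_d U(D+1)$, where $U\sim\mathcal U[0,1]$ is independent of $D$. The Wasserstein distance is $d_1(X,Y)=\sup_{h\in \mathrm{Lip}_1}|Eh(X)-Eh(Y)|$, where $\mathrm{Lip}_1=\{h:|h(y)-h(x)|\le|y-x|\}$. *)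

theory Defs
  imports "HOL-Probability.Probability"
begin

text \<open>Distribution of the number of comparisons C(n,m) made by Quickselect to find the
m-th smallest of n distinct numbers. The pivot has rank k, uniform on {1..n};
the left sublist has size L = k-1.  Meaningful for 1 <= m <= n.\<close>

function qs_comparisons :: "nat \<Rightarrow> nat \<Rightarrow> nat pmf" where
  "qs_comparisons n m =
     (if n = 0 then return_pmf 0
      else bind_pmf (pmf_of_set {1..n}) (\<lambda>k.
        if k = m then return_pmf (n - 1)
        else if m < k then map_pmf (\<lambda>c. (n - 1) + c) (qs_comparisons (k - 1) m)
        else map_pmf (\<lambda>c. (n - 1) + c) (qs_comparisons (n - k) (m - k))))"
  by pat_completeness auto
termination
  by (relation "Wellfounded.measure fst") auto

definition dickman_law :: "real measure \<Rightarrow> bool" where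
  "dickman_law \<mu> \<longleftrightarrow> prob_space \<mu> \<and> sets \<mu> = sets borel \<and> (AE x in \<mu>. 0 \<le> x) \<and>
     \<mu> = distr (uniform_measure lborel {0..1} \<Otimes>\<^sub>M \<mu>) borel (\<lambda>(u, d). u * (d + 1))"

definition wasserstein1 :: "real measure \<Rightarrow> real measure \<Rightarrow> ereal" where
  "wasserstein1 M N =
     (SUP h \<in> {h :: real \<Rightarrow> real. 1-lipschitz_on UNIV h}.
        ereal \<bar>(\<integral>x. h x \<partial>M) - (\<integral>x. h x \<partial>N)\<bar>)"

end

theory Submission
  imports Defs
begin

abbreviation UU :: "real measure" where "UU \<equiv> uniform_measure lborel {0..1}"

lemma UU_prob: "prob_space UU"
  by (rule prob_space_uniform_measure) auto

lemma dk_basic: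
  assumes "dickman_law \<mu>"
  shows "prob_space \<mu>" "sets \<mu> = sets borel" "AE x in \<mu>. 0 \<le> x"
    "\<mu> = distr (UU \<Otimes>\<^sub>M \<mu>) borel (\<lambda>(u, d). u * (d + 1))"
  using assms unfolding dickman_law_def by auto

lemma dk_fix:
  fixes h :: "real \<Rightarrow> real"
  assumes D: "dickman_law \<mu>" and hi: "integrable \<mu> h"
  shows "integral\<^sup>L \<mu> h = (\<integral>u. (\<integral>d. h (u * (d + 1)) \<partial>\<mu>) \<partial>UU)"
    "integral\<^sup>L \<mu> h = (\<integral>d. (\<integral>u. h (u * (d + 1)) \<partial>UU) \<partial>\<mu>)"
    "integrable (UU \<Otimes>\<^sub>M \<mu>) (\<lambda>(u,d). h (u * (d + 1)))"
    "integrable \<mu> (\<lambda>d. \<integral>u. h (u * (d + 1)) \<partial>UU)"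
    "integrable UU (\<lambda>u. \<integral>d. h (u * (d + 1)) \<partial>\<mu>)"
proof -
  note b = dk_basic[OF D]
  interpret P: prob_space \<mu> by (rule b(1))
  interpret U: prob_space UU by (rule UU_prob)
  interpret pair_sigma_finite UU \<mu> ..
  have hm: "h \<in> borel_measurable borel"
    using borel_measurable_integrable[OF hi] b(2) by (simp cong: measurable_cong_sets)
  have phim: "(\<lambda>(u, d). u * (d + 1)) \<in> borel_measurable (UU \<Otimes>\<^sub>M \<mu>)"
  proof -
    have "(\<lambda>(u::real, d::real). u * (d + 1)) \<in> borel_measurable (borel \<Otimes>\<^sub>M borel)"
      by measurable
    moreover have "sets (UU \<Otimes>\<^sub>M \<mu>) = sets (borel \<Otimes>\<^sub>M borel)"
      using b(2) by (intro sets_pair_measure_cong) auto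
    ultimately show ?thesis by (simp cong: measurable_cong_sets)
  qed
  have e1: "integral\<^sup>L \<mu> h = integral\<^sup>L (distr (UU \<Otimes>\<^sub>M \<mu>) borel (\<lambda>(u, d). u * (d + 1))) h"
    using b(4) by (rule arg_cong)
  have i1: "integrable (distr (UU \<Otimes>\<^sub>M \<mu>) borel (\<lambda>(u, d). u * (d + 1))) h"
    using hi b(4) by metis
  have i2: "integrable (UU \<Otimes>\<^sub>M \<mu>) (\<lambda>x. h ((\<lambda>(u, d). u * (d + 1)) x))"
    using i1 integrable_distr_eq[OF phim hm] by simp
  then show i3: "integrable (UU \<Otimes>\<^sub>M \<mu>) (\<lambda>(u,d). h (u * (d + 1)))"
    by (simp add: case_prod_beta')
  have e2: "integral\<^sup>L \<mu> h = integral\<^sup>L (UU \<Otimes>\<^sub>M \<mu>) (\<lambda>(u,d). h (u * (d + 1)))"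
    using e1 phim hm by (simp add: integral_distr case_prod_beta')
  show "integral\<^sup>L \<mu> h = (\<integral>u. (\<integral>d. h (u * (d + 1)) \<partial>\<mu>) \<partial>UU)"
    using e2 integral_fst[OF i3] by simp
  show "integral\<^sup>L \<mu> h = (\<integral>d. (\<integral>u. h (u * (d + 1)) \<partial>UU) \<partial>\<mu>)"
    using e2 integral_snd[OF i3] by simp
  show "integrable \<mu> (\<lambda>d. \<integral>u. h (u * (d + 1)) \<partial>UU)"
    using integrable_snd[OF i3] by simp
  show "integrable UU (\<lambda>u. \<integral>d. h (u * (d + 1)) \<partial>\<mu>)"
    using integrable_fst[OF i3] by simp
qed

lemma dk_meas:
  assumes "dickman_law \<mu>" "f \<in> borel_measurable borel"
  shows "f \<in> borel_measurable \<mu>"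
  using assms dk_basic(2)[OF assms(1)] by (simp cong: measurable_cong_sets)

lemma UU_density: "UU = density lborel (\<lambda>x. ennreal (indicator {0..1::real} x))"
  unfolding uniform_measure_def by (intro density_cong) (auto split: split_indicator)

lemma UU_int:
  fixes f :: "real \<Rightarrow> real"
  assumes c: "continuous_on UNIV f"
  shows "integrable UU f" "integral\<^sup>L UU f = integral {0..1} f"
proof -
  have fm: "f \<in> borel_measurable lborel"
    using c by (simp add: borel_measurable_continuous_onI)
  have si: "set_integrable lborel {0..1} f"
    by (rule borel_integrable_atLeastAtMost') (rule continuous_on_subset[OF c], simp)
  show "integrable UU f"
    unfolding UU_density using si fm
    by (subst integrable_density) (auto simp: set_integrable_def)
  have "integral\<^sup>L UU f = (LINT x:{0..1}|lborel. f x)"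
    unfolding UU_density using fm
    by (subst integral_density) (auto simp: set_lebesgue_integral_def)
  also have "\<dots> = integral {0..1} f"
    by (rule set_borel_integral_eq_integral(2)[OF si])
  finally show "integral\<^sup>L UU f = integral {0..1} f" .
qed

lemma UU_id: "integral\<^sup>L UU (\<lambda>x. x) = 1/2" "integrable UU (\<lambda>x. x)"
proof -
  have c: "continuous_on UNIV (\<lambda>x::real. x)" by (intro continuous_intros)
  have "integral {0..1::real} (\<lambda>x. x) = 1/2"
    using integral_power[of 1 0 1] by simp
  then show "integral\<^sup>L UU (\<lambda>x. x) = 1/2" using UU_int[OF c] by simp
  show "integrable UU (\<lambda>x. x)" using UU_int[OF c] by simp
qed

lemma AE_UU: "AE u in UU. 0 \<le> u \<and> u \<le> 1"
  by (rule AE_uniform_measureI) auto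

lemma dk_trunc_int:
  assumes D: "dickman_law \<mu>" and M: "0 \<le> M"
  shows "integrable \<mu> (\<lambda>x. min \<bar>x\<bar> M)"
proof -
  interpret P: prob_space \<mu> by (rule dk_basic(1)[OF D])
  show ?thesis
    by (rule P.integrable_const_bound[where B=M]) (auto simp: M intro!: dk_meas[OF D])
qed

lemma dk_step:
  assumes D: "dickman_law \<mu>" and M: "0 \<le> M"
  shows "(\<integral>x. min \<bar>x\<bar> M \<partial>\<mu>) \<le> (1 + (\<integral>x. min \<bar>x\<bar> (2*M) \<partial>\<mu>)) / 2"
proof -
  interpret P: prob_space \<mu> by (rule dk_basic(1)[OF D])
  interpret U: prob_space UU by (rule UU_prob)
  note fx = dk_fix[OF D dk_trunc_int[OF D M]]
  have inner: "AE d in \<mu>. (\<integral>u. min \<bar>u * (d + 1)\<bar> M \<partial>UU) \<le> (1 + min \<bar>d\<bar> (2*M)) / 2"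
    using dk_basic(3)[OF D]
  proof eventually_elim
    case (elim d)
    have im: "integrable UU (\<lambda>u. min \<bar>u * (d + 1)\<bar> M)"
      by (rule U.integrable_const_bound[where B=M]) (auto simp: M)
    have "(\<integral>u. min \<bar>u * (d + 1)\<bar> M \<partial>UU) \<le> (\<integral>u. u * (d + 1) \<partial>UU)"
      using AE_UU elim
      by (intro integral_mono_AE im) (auto simp: UU_id elim: eventually_mono)
    also have "\<dots> = (d + 1) / 2" using UU_id by simp
    finally have a: "(\<integral>u. min \<bar>u * (d + 1)\<bar> M \<partial>UU) \<le> (d + 1) / 2" .
    have "(\<integral>u. min \<bar>u * (d + 1)\<bar> M \<partial>UU) \<le> (\<integral>u. M \<partial>UU)"
      by (intro integral_mono im) auto
    then have b: "(\<integral>u. min \<bar>u * (d + 1)\<bar> M \<partial>UU) \<le> M" by simp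
    show ?case using a b elim by (auto simp: min_def split: if_splits)
  qed
  have "(\<integral>x. min \<bar>x\<bar> M \<partial>\<mu>) = (\<integral>d. (\<integral>u. min \<bar>u * (d + 1)\<bar> M \<partial>UU) \<partial>\<mu>)"
    using fx(2) by simp
  also have "\<dots> \<le> (\<integral>d. (1 + min \<bar>d\<bar> (2*M)) / 2 \<partial>\<mu>)"
    using inner dk_trunc_int[OF D, of "2*M"] M
    by (intro integral_mono_AE fx(4)) auto
  also have "\<dots> = (1 + (\<integral>x. min \<bar>x\<bar> (2*M) \<partial>\<mu>)) / 2"
    using dk_trunc_int[OF D, of "2*M"] M by (simp add: P.prob_space)
  finally show ?thesis .
qed

lemma hmin: "(0::real) < N \<Longrightarrow> min a N = N * min (a / N) 1"
  by (auto simp: min_def divide_le_eq not_le)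
lemma hpow: "(0::real) < M \<Longrightarrow> x / (2^k * M) = x / M * (1/2)^k"
  by (simp add: power_one_over)

lemma dk_trunc_le1:
  assumes D: "dickman_law \<mu>" and M: "0 \<le> M"
  shows "(\<integral>x. min \<bar>x\<bar> M \<partial>\<mu>) \<le> 1"
proof (cases "M = 0")
  case True then show ?thesis by simp
next
  case False
  with M have Mp: "0 < M" by simp
  interpret P: prob_space \<mu> by (rule dk_basic(1)[OF D])
  define e where "e N = (\<integral>x. min \<bar>x\<bar> N \<partial>\<mu>)" for N
  have it: "e M - 1 \<le> (e (2^k * M) - 1) / 2^k" for k
  proof (induction k)
    case 0 then show ?case by simp
  next
    case (Suc k)
    have "e (2^k * M) \<le> (1 + e (2 * (2^k * M))) / 2"
      unfolding e_def by (rule dk_step[OF D]) (use M in simp)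
    then have h2: "2 * (e (2^k * M) - 1) \<le> e (2^Suc k * M) - 1"
      by (simp add: algebra_simps)
    have "2 * (e (2^k * M) - 1) / 2^Suc k = (e (2^k * M) - 1) / 2^k"
      unfolding power_Suc by (rule nonzero_mult_divide_mult_cancel_left) simp
    then have "(e (2^k * M) - 1) / 2^k = 2 * (e (2^k * M) - 1) / 2^Suc k" by simp
    also have "\<dots> \<le> (e (2^Suc k * M) - 1) / 2^Suc k"
      by (rule divide_right_mono[OF h2]) simp
    finally have "(e (2^k * M) - 1) / 2^k \<le> (e (2^Suc k * M) - 1) / 2^Suc k" .
    with Suc show ?case by linarith
  qed
  define s where "s k x = min (\<bar>x\<bar> / (2^k * M)) 1" for k x
  have es: "e (2^k * M) / 2^k = M * (\<integral>x. s k x \<partial>\<mu>)" for k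
  proof -
    have "e (2^k * M) = (\<integral>x. (2^k * M) * s k x \<partial>\<mu>)"
      unfolding e_def s_def
      by (rule Bochner_Integration.integral_cong[OF refl]) (rule hmin, use Mp in simp)
    also have "\<dots> = (2^k * M) * (\<integral>x. s k x \<partial>\<mu>)" by simp
    finally show ?thesis by simp
  qed
  have sm: "s k \<in> borel_measurable \<mu>" for k
    unfolding s_def by (intro dk_meas[OF D]) measurable
  have lim: "(\<lambda>k. \<integral>x. s k x \<partial>\<mu>) \<longlonglongrightarrow> (\<integral>x. 0 \<partial>\<mu>)"
  proof (rule integral_dominated_convergence[where w="\<lambda>_. 1"])
    show "(\<lambda>x. 0::real) \<in> borel_measurable \<mu>" by simp
    show "s k \<in> borel_measurable \<mu>" for k by (rule sm)
    show "integrable \<mu> (\<lambda>_. 1::real)" by simp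
    show "AE x in \<mu>. norm (s k x) \<le> 1" for k using Mp by (intro AE_I2) (auto simp: s_def)
    show "AE x in \<mu>. (\<lambda>k. s k x) \<longlonglongrightarrow> 0"
    proof (rule AE_I2)
      fix x
      have "(\<lambda>k. \<bar>x\<bar> / M * (1/2)^k) \<longlonglongrightarrow> \<bar>x\<bar> / M * 0"
        by (intro tendsto_mult tendsto_const LIMSEQ_power_zero) auto
      then have l: "(\<lambda>k. \<bar>x\<bar> / (2^k * M)) \<longlonglongrightarrow> 0"
        using hpow[OF Mp] by simp
      have "(\<lambda>k. min (\<bar>x\<bar> / (2^k * M)) 1) \<longlonglongrightarrow> min 0 1"
        by (intro tendsto_min l tendsto_const)
      then show "(\<lambda>k. s k x) \<longlonglongrightarrow> 0" by (simp add: s_def)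
    qed
  qed
  then have lim2: "(\<lambda>k. M * (\<integral>x. s k x \<partial>\<mu>)) \<longlonglongrightarrow> 0"
    using tendsto_mult[OF tendsto_const[of M] lim] by simp
  have "e M - 1 \<le> 0"
  proof (rule LIMSEQ_le_const[OF lim2], intro exI allI impI)
    fix k :: nat
    have "e M - 1 \<le> (e (2^k * M) - 1) / 2^k" by (rule it)
    also have "\<dots> \<le> e (2^k * M) / 2^k" by (simp add: divide_right_mono)
    finally show "e M - 1 \<le> M * (\<integral>x. s k x \<partial>\<mu>)" using es by simp
  qed
  then show ?thesis by (simp add: e_def)
qed

lemma dk_abs:
  assumes D: "dickman_law \<mu>"
  shows "integrable \<mu> abs" "(\<integral>x. \<bar>x\<bar> \<partial>\<mu>) \<le> 1"
proof -
  interpret P: prob_space \<mu> by (rule dk_basic(1)[OF D])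
  define f where "f n x = min \<bar>x\<bar> (real n)" for n x
  have fi: "integrable \<mu> (f n)" for n unfolding f_def by (rule dk_trunc_int[OF D]) simp
  have inc: "incseq (\<lambda>n. integral\<^sup>L \<mu> (f n))"
    unfolding incseq_def f_def using dk_trunc_int[OF D]
    by (auto intro!: integral_mono)
  have bdd: "bdd_above (range (\<lambda>n. integral\<^sup>L \<mu> (f n)))"
    unfolding f_def using dk_trunc_le1[OF D] by (auto intro!: bdd_aboveI[where M=1])
  note L = LIMSEQ_incseq_SUP[OF bdd inc]
  have mc: "integrable \<mu> abs \<and> integral\<^sup>L \<mu> abs = (SUP n. integral\<^sup>L \<mu> (f n))"
  proof -
    have pl: "AE x in \<mu>. (\<lambda>i. f i x) \<longlonglongrightarrow> \<bar>x\<bar>"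
    proof (rule AE_I2)
      fix x :: real
      have "eventually (\<lambda>i. f i x = \<bar>x\<bar>) sequentially"
        unfolding f_def using eventually_ge_at_top[of "nat \<lceil>\<bar>x\<bar>\<rceil>"]
      proof eventually_elim
        case (elim i)
        have "\<bar>x\<bar> \<le> real (nat \<lceil>\<bar>x\<bar>\<rceil>)" by (rule real_nat_ceiling_ge)
        also have "\<dots> \<le> real i" by (rule of_nat_mono[OF elim])
        finally show ?case by (simp add: min_def)
      qed
      then show "(\<lambda>i. f i x) \<longlonglongrightarrow> \<bar>x\<bar>" by (rule tendsto_eventually)
    qed
    have m1: "AE x in \<mu>. mono (\<lambda>n. f n x)"
      by (intro AE_I2 monoI) (auto simp: f_def intro: min.mono)
    have p: "AE x in \<mu>. 0 \<le> f i x" for i by (simp add: f_def)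
    have um: "abs \<in> borel_measurable \<mu>" by (rule dk_meas[OF D]) simp
    note r = integral_monotone_convergence_nonneg[OF fi m1 p pl L um]
    then show ?thesis by simp
  qed
  then show "integrable \<mu> abs" by simp
  have "(SUP n. integral\<^sup>L \<mu> (f n)) \<le> 1"
    unfolding f_def using dk_trunc_le1[OF D] by (intro cSUP_least) auto
  with mc show "(\<integral>x. \<bar>x\<bar> \<partial>\<mu>) \<le> 1" by simp
qed

lemma R1:
  assumes "1 \<le> m" "m \<le> n"
  shows "(\<Sum>i\<in>{m..<n}. ln (real i / real m)) \<le> real n * ln (real n / real m) - (real n - real m)"
  using assms(2)
proof (induction n rule: dec_induct)
  case base then show ?case by simp
next
  case (step n)
  have n0: "0 < real n" "0 < real m" using step assms by auto
  have key: "(1 + real n) * ln (real n / (1 + real n)) \<le> -1"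
  proof -
    have "ln (real n / (1 + real n)) \<le> real n / (1 + real n) - 1"
      using n0 by (intro ln_le_minus_one) simp
    then have "(1 + real n) * ln (real n / (1 + real n)) \<le> (1 + real n) * (real n / (1 + real n) - 1)"
      using n0 by (intro mult_left_mono) auto
    also have "\<dots> = -1" using n0 by (simp add: field_simps)
    finally show ?thesis .
  qed
  have l1: "ln (real n / real m) = ln (real n) - ln (real m)" using n0 by (simp add: ln_div)
  have l2: "ln ((1 + real n) / real m) = ln (1 + real n) - ln (real m)" using n0 by (simp add: ln_div)
  have l3: "ln (real n / (1 + real n)) = ln (real n) - ln (1 + real n)" using n0 by (simp add: ln_div)
  have "(\<Sum>i\<in>{m..<Suc n}. ln (real i / real m)) = (\<Sum>i\<in>{m..<n}. ln (real i / real m)) + ln (real n / real m)"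
    using step by simp
  also have "\<dots> \<le> real n * ln (real n / real m) - (real n - real m) + ln (real n / real m)"
    using step by simp
  also have "\<dots> \<le> (1 + real n) * ln ((1 + real n) / real m) - ((1 + real n) - real m)"
    using key unfolding l1 l2 l3
    by (simp only: right_diff_distrib left_diff_distrib distrib_left distrib_right; linarith)
  finally show ?case by (simp only: of_nat_Suc)
qed

lemma R2a:
  assumes "1 \<le> m"
  shows "(\<Sum>j\<in>{1..<m}. ln (real m / real j)) \<le> real m - 1"
  using assms
proof (induction m rule: dec_induct)
  case base then show ?case by simp
next
  case (step m)
  have m0: "0 < real m" using step by simp
  define c where "c = ln (real (Suc m) / real m)"
  have lq: "c \<le> 1 / real m"
  proof -
    have "c \<le> real (Suc m) / real m - 1"
      unfolding c_def using m0 by (intro ln_le_minus_one) simp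
    also have "\<dots> = 1 / real m" using m0 by (simp add: field_simps)
    finally show ?thesis .
  qed
  have sp: "ln (real (Suc m) / real j) = ln (real m / real j) + c"
    if "j \<in> {1..<m}" for j
  proof -
    have j0: "0 < real j" using that by simp
    have "real (Suc m) / real j = (real m / real j) * (real (Suc m) / real m)"
      using m0 j0 by (simp add: field_simps)
    then have "ln (real (Suc m) / real j) = ln ((real m / real j) * (real (Suc m) / real m))"
      by (rule arg_cong)
    also have "\<dots> = ln (real m / real j) + c"
      unfolding c_def using m0 j0 by (intro ln_mult_pos) auto
    finally show ?thesis .
  qed
  have "(\<Sum>j\<in>{1..<Suc m}. ln (real (Suc m) / real j))
      = (\<Sum>j\<in>{1..<m}. ln (real (Suc m) / real j)) + c"
    unfolding c_def by (rule sum.atLeastLessThan_Suc) (use step in simp)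
  also have "(\<Sum>j\<in>{1..<m}. ln (real (Suc m) / real j)) = (\<Sum>j\<in>{1..<m}. ln (real m / real j) + c)"
    by (rule sum.cong[OF refl sp])
  also have "\<dots> = (\<Sum>j\<in>{1..<m}. ln (real m / real j)) + real (m - 1) * c"
    by (simp add: sum.distrib)
  finally have e: "(\<Sum>j\<in>{1..<Suc m}. ln (real (Suc m) / real j))
      = (\<Sum>j\<in>{1..<m}. ln (real m / real j)) + real m * c"
    using step by (simp add: of_nat_diff algebra_simps)
  have "real m * c \<le> real m * (1 / real m)"
    using lq m0 by (intro mult_left_mono) auto
  then have "real m * c \<le> 1" using m0 by simp
  then show ?case using e step.IH by simp
qed

lemma R2:
  assumes "1 \<le> m"
  shows "(\<Sum>k\<in>{1..<m}. ln (real m / real (m - k))) \<le> real m - 1"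
proof -
  have "(\<Sum>j\<in>{1..<m}. ln (real m / real j)) = (\<Sum>k\<in>{1..<m}. ln (real m / real (m + 1 - Suc k)))"
    by (rule sum.atLeastLessThan_rev)
  then show ?thesis using R2a[OF assms] by simp
qed

lemma R3: "(\<Sum>k\<in>{1..<m}. real k) = real m * (real m - 1) / 2"
proof (induction m)
  case 0 then show ?case by simp
next
  case (Suc m)
  show ?case
  proof (cases "m = 0")
    case True then show ?thesis by simp
  next
    case False
    then have "(\<Sum>k\<in>{1..<Suc m}. real k) = (\<Sum>k\<in>{1..<m}. real k) + real m" by simp
    then show ?thesis using Suc by (simp add: field_simps)
  qed
qed

lemma R3b: "(\<Sum>k\<in>{1..<m}. real (m - k)) = real m * (real m - 1) / 2"
proof -
  have "(\<Sum>j\<in>{1..<m}. real j) = (\<Sum>k\<in>{1..<m}. real (m + 1 - Suc k))"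
    by (rule sum.atLeastLessThan_rev)
  then show ?thesis using R3[of m] by simp
qed

definition PP :: "nat \<Rightarrow> nat \<Rightarrow> real" where
  "PP j i = (46 * real j + 8) * ln (real i / real j) + 54 * real j + 8"

definition FF :: "nat \<Rightarrow> nat \<Rightarrow> nat \<Rightarrow> real" where
  "FF n m k = (if k = m then 2 * real m - 1 else if m < k then PP m (k - 1) + 1
               else PP (m - k) (n - k) + 1 + 2 * real n)"

lemma small_term:
  assumes "1 \<le> k" "k < m" "m \<le> n"
  shows "PP (m - k) (n - k) \<le> ln (real n / real m) * (46 * real (m - k) + 8) + 46 * real k
          + 8 * ln (real m / real (m - k)) + 54 * real (m - k) + 8"
proof -
  define j where "j = real (m - k)"
  have j1: "1 \<le> j" using assms unfolding j_def by simp
  have jm: "j = real m - real k" using assms unfolding j_def by (simp add: of_nat_diff)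
  have m0: "0 < real m" using assms by simp
  have n0: "0 < real n" using assms by simp
  have nk: "real (n - k) = real n - real k" using assms by (simp add: of_nat_diff)
  have nkp: "0 < real n - real k" using assms by simp
  have l1: "ln ((real n - real k) / j) \<le> ln (real n / j)"
    using j1 nkp by (intro ln_mono) (auto simp: divide_right_mono)
  have l2: "ln (real n / j) = ln (real n / real m) + ln (real m / j)"
    using m0 n0 j1 by (simp add: ln_div)
  have l3: "j * ln (real m / j) \<le> real k"
  proof -
    have "ln (real m / j) \<le> real m / j - 1" using m0 j1 by (intro ln_le_minus_one) simp
    then have "j * ln (real m / j) \<le> j * (real m / j - 1)" using j1 by (intro mult_left_mono) auto
    also have "\<dots> = real m - j" using j1 by (simp add: right_diff_distrib)
    also have "\<dots> = real k" using jm by simp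
    finally show ?thesis .
  qed
  have "PP (m - k) (n - k) = (46 * j + 8) * ln ((real n - real k) / j) + 54 * j + 8"
    unfolding PP_def j_def[symmetric] nk ..
  also have "\<dots> \<le> (46 * j + 8) * (ln (real n / real m) + ln (real m / j)) + 54 * j + 8"
    using l1 l2 j1 by (intro add_mono mult_left_mono) auto
  also have "\<dots> = ln (real n / real m) * (46 * j + 8) + 46 * (j * ln (real m / j))
          + 8 * ln (real m / j) + 54 * j + 8"
    by (simp add: algebra_simps)
  also have "\<dots> \<le> ln (real n / real m) * (46 * j + 8) + 46 * real k
          + 8 * ln (real m / j) + 54 * j + 8"
    using l3 by simp
  finally show ?thesis unfolding j_def .
qed

lemma final_ineq:
  assumes m1: "1 \<le> m" and mn: "m \<le> n"
  shows "(\<Sum>k\<in>{1..n}. FF n m k) + 2 * real n \<le> real n * PP m n"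
proof -
  define Lg where "Lg = ln (real n / real m)"
  define a where "a = real m"
  define b where "b = real n"
  have a1: "1 \<le> a" and ab: "a \<le> b" using m1 mn unfolding a_def b_def by auto
  have Lg0: "0 \<le> Lg" unfolding Lg_def using m1 mn by simp
  have mL: "a * Lg \<le> b - a"
  proof -
    have "Lg \<le> b / a - 1" unfolding Lg_def a_def b_def using m1 mn by (intro ln_le_minus_one) simp
    then have "a * Lg \<le> a * (b / a - 1)" using a1 by (intro mult_left_mono) auto
    also have "\<dots> = b - a" using a1 by (simp add: right_diff_distrib)
    finally show ?thesis .
  qed
  have split: "(\<Sum>k\<in>{1..n}. FF n m k) = (\<Sum>k\<in>{1..<m}. FF n m k) + FF n m m + (\<Sum>i\<in>{m..<n}. FF n m (Suc i))"
  proof -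
    have "(\<Sum>k\<in>{1..n}. FF n m k) = (\<Sum>k\<in>{1..<Suc n}. FF n m k)"
      by (simp add: atLeastLessThanSuc_atLeastAtMost)
    also have "\<dots> = (\<Sum>k\<in>{1..<m}. FF n m k) + (\<Sum>k\<in>{m..<Suc n}. FF n m k)"
      using m1 mn by (intro sum.atLeastLessThan_concat[symmetric]) auto
    also have "(\<Sum>k\<in>{m..<Suc n}. FF n m k) = FF n m m + (\<Sum>k\<in>{Suc m..<Suc n}. FF n m k)"
      using mn by (intro sum.atLeast_Suc_lessThan) auto
    also have "(\<Sum>k\<in>{Suc m..<Suc n}. FF n m k) = (\<Sum>i\<in>{m..<n}. FF n m (Suc i))"
      by (rule sum.shift_bounds_Suc_ivl)
    finally show ?thesis by simp
  qed
  have big: "(\<Sum>i\<in>{m..<n}. FF n m (Suc i)) = (46 * a + 8) * (\<Sum>i\<in>{m..<n}. ln (real i / real m)) + (54 * a + 9) * (b - a)"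
  proof -
    have "(\<Sum>i\<in>{m..<n}. FF n m (Suc i)) = (\<Sum>i\<in>{m..<n}. (46 * a + 8) * ln (real i / real m) + (54 * a + 9))"
      by (intro sum.cong refl) (auto simp: FF_def PP_def a_def)
    also have "\<dots> = (46 * a + 8) * (\<Sum>i\<in>{m..<n}. ln (real i / real m)) + (54 * a + 9) * (b - a)"
      using mn by (simp add: sum.distrib sum_distrib_left a_def b_def of_nat_diff)
    finally show ?thesis .
  qed
  have bigle: "(\<Sum>i\<in>{m..<n}. FF n m (Suc i)) \<le> (46 * a + 8) * (b * Lg - (b - a)) + (54 * a + 9) * (b - a)"
    unfolding big using R1[OF m1 mn] a1 unfolding Lg_def a_def b_def
    by (intro add_mono mult_left_mono) auto
  define G where "G k = Lg * 46 * real (m - k) + Lg * 8 + 46 * real k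
          + 8 * ln (real m / real (m - k)) + 54 * real (m - k) + (9 + 2 * b)" for k
  have small: "(\<Sum>k\<in>{1..<m}. FF n m k) \<le> (\<Sum>k\<in>{1..<m}. G k)"
  proof (intro sum_mono)
    fix k assume k: "k \<in> {1..<m}"
    then show "FF n m k \<le> G k"
      using small_term[of k m n] mn unfolding FF_def G_def Lg_def b_def by (auto simp: algebra_simps)
  qed
  have S1: "(\<Sum>k\<in>{1..<m}. real (m - k)) = a * (a - 1) / 2" using R3b unfolding a_def .
  have S2: "(\<Sum>k\<in>{1..<m}. real k) = a * (a - 1) / 2" using R3 unfolding a_def .
  have S3: "(\<Sum>k\<in>{1..<m}. ln (real m / real (m - k))) \<le> a - 1" using R2[OF m1] unfolding a_def .
  have cm: "real (card {1..<m}) = a - 1" using m1 unfolding a_def by (simp add: of_nat_diff)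
  have sG: "(\<Sum>k\<in>{1..<m}. G k) = Lg * 46 * (\<Sum>k\<in>{1..<m}. real (m - k)) + (a - 1) * (Lg * 8)
      + 46 * (\<Sum>k\<in>{1..<m}. real k) + 8 * (\<Sum>k\<in>{1..<m}. ln (real m / real (m - k)))
      + 54 * (\<Sum>k\<in>{1..<m}. real (m - k)) + (a - 1) * (9 + 2 * b)"
    unfolding G_def by (simp only: sum.distrib sum_distrib_left[symmetric] sum_constant cm) (simp add: algebra_simps)
  define T where "T = (\<Sum>k\<in>{1..<m}. ln (real m / real (m - k)))"
  have sG2: "(\<Sum>k\<in>{1..<m}. G k) = Lg * ((a - 1) * (23 * a + 8)) + 23 * a * (a - 1) + 8 * T
      + 27 * a * (a - 1) + (a - 1) * (9 + 2 * b)"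
    unfolding sG S1 S2 T_def[symmetric] by (simp add: field_simps)
  have sGle: "(\<Sum>k\<in>{1..<m}. G k) \<le> Lg * ((a - 1) * (23 * a + 8)) + 23 * a * (a - 1) + 8 * (a - 1)
      + 27 * a * (a - 1) + (a - 1) * (9 + 2 * b)"
    unfolding sG2 using S3 unfolding T_def[symmetric] by (intro add_mono order_refl) simp
  have X: "Lg * ((a - 1) * (23 * a + 8)) \<le> (23 * a + 8) * (b - a)"
  proof -
    have "(a - 1) * Lg \<le> a * Lg" using Lg0 by (simp add: algebra_simps)
    then have "(a - 1) * Lg \<le> b - a" using mL by simp
    then have "(23 * a + 8) * ((a - 1) * Lg) \<le> (23 * a + 8) * (b - a)"
      using a1 by (intro mult_left_mono) auto
    then show ?thesis by (simp add: algebra_simps)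
  qed
  have FFm: "FF n m m = 2 * a - 1" unfolding FF_def a_def by simp
  have PPn: "real n * PP m n = b * ((46 * a + 8) * Lg + 54 * a + 8)"
    unfolding PP_def Lg_def a_def b_def ..
  have aa: "a * a \<le> a * b" using a1 ab by (intro mult_left_mono) auto
  have bb: "b \<le> a * b" using a1 ab by simp
  show ?thesis
    unfolding split PPn FFm
    using small sGle X bigle a1 ab
    by (simp add: algebra_simps b_def[symmetric]) (use aa bb Lg0 in \<open>simp add: algebra_simps, linarith\<close>)
qed

lemma lipD': "L-lipschitz_on UNIV h \<Longrightarrow> \<bar>h x - h y\<bar> \<le> L * \<bar>x - y\<bar>"
  for h :: "real \<Rightarrow> real"
  using lipschitz_onD[of L UNIV h x y] by (simp add: dist_real_def)

lemma lip_nonneg': "L-lipschitz_on UNIV h \<Longrightarrow> 0 \<le> L"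
  by (simp add: lipschitz_on_def)

lemma lip_affine:
  fixes h :: "real \<Rightarrow> real"
  assumes "L-lipschitz_on UNIV h"
  shows "(L * \<bar>a\<bar>)-lipschitz_on UNIV (\<lambda>w. h (a * (w + 1) - c))"
proof (rule lipschitz_onI)
  show "0 \<le> L * \<bar>a\<bar>" using lip_nonneg'[OF assms] by simp
  fix x y :: real
  have "\<bar>h (a * (x + 1) - c) - h (a * (y + 1) - c)\<bar> \<le> L * \<bar>(a * (x + 1) - c) - (a * (y + 1) - c)\<bar>"
    by (rule lipD'[OF assms])
  also have "\<bar>(a * (x + 1) - c) - (a * (y + 1) - c)\<bar> = \<bar>a\<bar> * \<bar>x - y\<bar>"
    by (simp add: algebra_simps abs_mult[symmetric])
  finally show "dist (h (a * (x + 1) - c)) (h (a * (y + 1) - c)) \<le> L * \<bar>a\<bar> * dist x y"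
    by (simp add: dist_real_def mult.assoc)
qed

lemma lip_meas: "L-lipschitz_on UNIV h \<Longrightarrow> h \<in> borel_measurable borel"
  for h :: "real \<Rightarrow> real"
  by (intro borel_measurable_continuous_onI lipschitz_on_continuous_on)

lemma lip_int:
  fixes h :: "real \<Rightarrow> real"
  assumes D: "dickman_law \<mu>" and h: "L-lipschitz_on UNIV h"
  shows "integrable \<mu> (\<lambda>x. h (\<alpha> * x + \<beta>))"
proof (rule Bochner_Integration.integrable_bound)
  have L0: "0 \<le> L" using lip_nonneg'[OF h] .
  show "integrable \<mu> (\<lambda>x. \<bar>h \<beta>\<bar> + L * \<bar>\<alpha>\<bar> * \<bar>x\<bar>)"
    using dk_abs(1)[OF D] dk_basic(1)[OF D]
    by (intro Bochner_Integration.integrable_add integrable_mult_right)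
       (auto simp: prob_space.finite_measure finite_measure.integrable_const)
  have hm: "h \<in> borel_measurable borel" by (rule lip_meas[OF h])
  show "(\<lambda>x. h (\<alpha> * x + \<beta>)) \<in> borel_measurable \<mu>"
    by (rule dk_meas[OF D]) (rule measurable_compose[OF _ hm], simp)
  show "AE x in \<mu>. norm (h (\<alpha> * x + \<beta>)) \<le> norm (\<bar>h \<beta>\<bar> + L * \<bar>\<alpha>\<bar> * \<bar>x\<bar>)"
  proof (rule AE_I2)
    fix x
    have "\<bar>h (\<alpha> * x + \<beta>) - h \<beta>\<bar> \<le> L * \<bar>(\<alpha> * x + \<beta>) - \<beta>\<bar>" by (rule lipD'[OF h])
    then have "\<bar>h (\<alpha> * x + \<beta>)\<bar> \<le> \<bar>h \<beta>\<bar> + L * \<bar>\<alpha>\<bar> * \<bar>x\<bar>"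
      by (simp add: abs_mult mult.assoc)
    then show "norm (h (\<alpha> * x + \<beta>)) \<le> norm (\<bar>h \<beta>\<bar> + L * \<bar>\<alpha>\<bar> * \<bar>x\<bar>)"
      using L0 by simp
  qed
qed

definition gfun :: "real measure \<Rightarrow> (real \<Rightarrow> real) \<Rightarrow> real \<Rightarrow> real" where
  "gfun \<mu> h u = (\<integral>d. h (u * (d + 1)) \<partial>\<mu>)"

lemma int_diff_bound:
  fixes f g :: "real \<Rightarrow> real"
  assumes D: "dickman_law \<mu>" and f: "integrable \<mu> f" and g: "integrable \<mu> g"
    and b: "integrable \<mu> B" and le: "\<And>x. \<bar>f x - g x\<bar> \<le> B x"
  shows "\<bar>(\<integral>x. f x \<partial>\<mu>) - (\<integral>x. g x \<partial>\<mu>)\<bar> \<le> (\<integral>x. B x \<partial>\<mu>)"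
proof -
  have "\<bar>(\<integral>x. f x \<partial>\<mu>) - (\<integral>x. g x \<partial>\<mu>)\<bar> = \<bar>\<integral>x. f x - g x \<partial>\<mu>\<bar>"
    using f g by simp
  also have "\<dots> \<le> (\<integral>x. B x \<partial>\<mu>)"
    using Bochner_Integration.integral_norm_bound_integral[of \<mu> "\<lambda>x. f x - g x" B] f g b le by simp
  finally show ?thesis .
qed

lemma g_lip:
  fixes h :: "real \<Rightarrow> real"
  assumes D: "dickman_law \<mu>" and h: "L-lipschitz_on UNIV h"
  shows "\<bar>gfun \<mu> h u - gfun \<mu> h v\<bar> \<le> 2 * L * \<bar>u - v\<bar>"
proof -
  interpret P: prob_space \<mu> by (rule dk_basic(1)[OF D])
  have L0: "0 \<le> L" using lip_nonneg'[OF h] .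
  have iu: "integrable \<mu> (\<lambda>d. h (u * (d + 1)))" for u
    using lip_int[OF D h, of u u] by (simp add: algebra_simps)
  have ib: "integrable \<mu> (\<lambda>d. L * \<bar>u - v\<bar> * (\<bar>d\<bar> + 1))"
    using dk_abs(1)[OF D] by (intro integrable_mult_right Bochner_Integration.integrable_add) auto
  have "\<bar>gfun \<mu> h u - gfun \<mu> h v\<bar> \<le> (\<integral>d. L * \<bar>u - v\<bar> * (\<bar>d\<bar> + 1) \<partial>\<mu>)"
    unfolding gfun_def
  proof (rule int_diff_bound[OF D iu iu ib])
    fix d :: real
    have "\<bar>h (u * (d + 1)) - h (v * (d + 1))\<bar> \<le> L * \<bar>u * (d + 1) - v * (d + 1)\<bar>" by (rule lipD'[OF h])
    also have "\<bar>u * (d + 1) - v * (d + 1)\<bar> = \<bar>u - v\<bar> * \<bar>d + 1\<bar>"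
      by (simp add: left_diff_distrib[symmetric] abs_mult)
    also have "L * (\<bar>u - v\<bar> * \<bar>d + 1\<bar>) \<le> L * (\<bar>u - v\<bar> * (\<bar>d\<bar> + 1))"
      using L0 by (intro mult_left_mono) (auto intro: mult_left_mono)
    finally show "\<bar>h (u * (d + 1)) - h (v * (d + 1))\<bar> \<le> L * \<bar>u - v\<bar> * (\<bar>d\<bar> + 1)"
      by (simp add: mult.assoc)
  qed
  also have "\<dots> = L * \<bar>u - v\<bar> * ((\<integral>d. \<bar>d\<bar> \<partial>\<mu>) + 1)"
    using dk_abs(1)[OF D] by (simp add: P.prob_space)
  also have "\<dots> \<le> L * \<bar>u - v\<bar> * 2"
    using dk_abs(2)[OF D] L0 by (intro mult_left_mono) auto
  finally show ?thesis by (simp add: algebra_simps)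
qed

lemma g_lipschitz:
  fixes h :: "real \<Rightarrow> real"
  assumes D: "dickman_law \<mu>" and h: "L-lipschitz_on UNIV h"
  shows "(2 * L)-lipschitz_on UNIV (gfun \<mu> h)"
  using g_lip[OF D h] lip_nonneg'[OF h] by (intro lipschitz_onI) (auto simp: dist_real_def)

lemma g_shift:
  fixes h :: "real \<Rightarrow> real"
  assumes D: "dickman_law \<mu>" and h: "L-lipschitz_on UNIV h"
  shows "\<bar>(\<integral>d. h (a * (d + 1) - c) \<partial>\<mu>) - gfun \<mu> h a\<bar> \<le> L * \<bar>c\<bar>"
proof -
  interpret P: prob_space \<mu> by (rule dk_basic(1)[OF D])
  have i1: "integrable \<mu> (\<lambda>d. h (a * (d + 1) - c))"
    using lip_int[OF D h, of a "a - c"] by (simp add: algebra_simps)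
  have i2: "integrable \<mu> (\<lambda>d. h (a * (d + 1)))"
    using lip_int[OF D h, of a a] by (simp add: algebra_simps)
  have "\<bar>(\<integral>d. h (a * (d + 1) - c) \<partial>\<mu>) - gfun \<mu> h a\<bar> \<le> (\<integral>d. L * \<bar>c\<bar> \<partial>\<mu>)"
    unfolding gfun_def
  proof (rule int_diff_bound[OF D i1 i2])
    show "integrable \<mu> (\<lambda>d. L * \<bar>c\<bar>)" by simp
    fix d :: real
    show "\<bar>h (a * (d + 1) - c) - h (a * (d + 1))\<bar> \<le> L * \<bar>c\<bar>"
      using lipD'[OF h, of "a * (d + 1) - c" "a * (d + 1)"] by simp
  qed
  then show ?thesis by (simp add: P.prob_space)
qed

lemma g_zero:
  fixes h :: "real \<Rightarrow> real"
  assumes D: "dickman_law \<mu>"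
  shows "gfun \<mu> h 0 = h 0"
proof -
  interpret P: prob_space \<mu> by (rule dk_basic(1)[OF D])
  show ?thesis by (simp add: gfun_def P.prob_space)
qed

lemma g_int:
  fixes h :: "real \<Rightarrow> real"
  assumes D: "dickman_law \<mu>" and h: "L-lipschitz_on UNIV h"
  shows "(\<integral>x. h x \<partial>\<mu>) = integral {0..1} (gfun \<mu> h)"
proof -
  have hi: "integrable \<mu> h" using lip_int[OF D h, of 1 0] by simp
  have c: "continuous_on UNIV (gfun \<mu> h)"
    by (rule lipschitz_on_continuous_on[OF g_lipschitz[OF D h]])
  have "(\<integral>x. h x \<partial>\<mu>) = integral\<^sup>L UU (gfun \<mu> h)"
    unfolding gfun_def by (rule dk_fix(1)[OF D hi])
  also have "\<dots> = integral {0..1} (gfun \<mu> h)" by (rule UU_int(2)[OF c])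
  finally show ?thesis .
qed

lemma piece:
  fixes g :: "real \<Rightarrow> real"
  assumes g: "K-lipschitz_on UNIV g" and lr: "l \<le> r"
  shows "\<bar>integral {l..r} g - (r - l) * g l\<bar> \<le> K * (r - l) * (r - l)"
proof -
  have c: "continuous_on {l..r} g"
    using lipschitz_on_continuous_on[OF g] by (rule continuous_on_subset) simp
  have c2: "continuous_on {l..r} (\<lambda>u. g u - g l)"
    by (intro continuous_intros c)
  have "integral {l..r} (\<lambda>u. g u - g l) = integral {l..r} g - integral {l..r} (\<lambda>u. g l)"
    by (rule integral_diff) (auto intro: integrable_continuous_interval c)
  also have "integral {l..r} (\<lambda>u. g l) = (r - l) * g l" using lr by simp
  finally have e: "integral {l..r} g - (r - l) * g l = integral {l..r} (\<lambda>u. g u - g l)" by simp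
  have "norm (integral {l..r} (\<lambda>u. g u - g l)) \<le> (K * (r - l)) * (r - l)"
  proof (rule Henstock_Kurzweil_Integration.integral_bound[OF lr c2])
    fix t assume t: "t \<in> {l..r}"
    have "\<bar>g t - g l\<bar> \<le> K * \<bar>t - l\<bar>" using lipschitz_onD[OF g, of t l] by (simp add: dist_real_def)
    also have "\<dots> \<le> K * (r - l)" using t lipschitz_on_nonneg[OF g] by (intro mult_left_mono) auto
    finally show "norm (g t - g l) \<le> K * (r - l)" by simp
  qed
  then show ?thesis unfolding e by simp
qed

lemma riemann:
  fixes g :: "real \<Rightarrow> real"
  assumes g: "K-lipschitz_on UNIV g" and n: "1 \<le> n"
  shows "\<bar>integral {0..1} g - (\<Sum>k\<in>{1..n}. g (real (k - 1) / real n)) / real n\<bar> \<le> K / real n"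
proof -
  have n0: "0 < real n" using n by simp
  have K0: "0 \<le> K" using lipschitz_on_nonneg[OF g] .
  have cg: "continuous_on UNIV g" by (rule lipschitz_on_continuous_on[OF g])
  have gen: "\<bar>integral {0..real j / real n} g - (\<Sum>k\<in>{1..j}. g (real (k - 1) / real n)) / real n\<bar>
      \<le> real j * K / (real n * real n)" for j
  proof (induction j)
    case 0 then show ?case by simp
  next
    case (Suc j)
    have c: "integral {0..real j / real n} g + integral {real j / real n..real (Suc j) / real n} g
        = integral {0..real (Suc j) / real n} g"
      by (intro Henstock_Kurzweil_Integration.integral_combine integrable_continuous_interval continuous_on_subset[OF cg])
         (use n0 in \<open>auto simp: divide_right_mono\<close>)
    have p: "\<bar>integral {real j / real n..real (Suc j) / real n} g - (1 / real n) * g (real j / real n)\<bar>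
        \<le> K / (real n * real n)"
    proof -
      have "\<bar>integral {real j / real n..real (Suc j) / real n} g
          - (real (Suc j) / real n - real j / real n) * g (real j / real n)\<bar>
          \<le> K * (real (Suc j) / real n - real j / real n) * (real (Suc j) / real n - real j / real n)"
        using n0 by (intro piece[OF g]) (auto simp: divide_right_mono)
      moreover have "real (Suc j) / real n - real j / real n = 1 / real n"
        using n0 by (simp add: field_simps)
      ultimately show ?thesis by simp
    qed
    have s: "(\<Sum>k\<in>{1..Suc j}. g (real (k - 1) / real n)) = (\<Sum>k\<in>{1..j}. g (real (k - 1) / real n)) + g (real j / real n)"
      by simp
    have "\<bar>integral {0..real (Suc j) / real n} g - (\<Sum>k\<in>{1..Suc j}. g (real (k - 1) / real n)) / real n\<bar>
       = \<bar>(integral {0..real j / real n} g - (\<Sum>k\<in>{1..j}. g (real (k - 1) / real n)) / real n)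
          + (integral {real j / real n..real (Suc j) / real n} g - (1 / real n) * g (real j / real n))\<bar>"
      unfolding c[symmetric] s by (simp add: add_divide_distrib algebra_simps)
    also have "\<dots> \<le> real j * K / (real n * real n) + K / (real n * real n)"
      using Suc.IH p by (intro order.trans[OF abs_triangle_ineq] add_mono)
    also have "\<dots> = real (Suc j) * K / (real n * real n)"
      by (simp add: add_divide_distrib algebra_simps)
    finally show ?case .
  qed
  have "real n * K / (real n * real n) = K / real n" using n0 by simp
  with gen[of n] n0 show ?thesis by simp
qed

declare qs_comparisons.simps[simp del]

definition qbody :: "nat \<Rightarrow> nat \<Rightarrow> nat \<Rightarrow> nat pmf" where
  "qbody n m k = (if k = m then return_pmf (n - 1)
        else if m < k then map_pmf (\<lambda>c. (n - 1) + c) (qs_comparisons (k - 1) m)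
        else map_pmf (\<lambda>c. (n - 1) + c) (qs_comparisons (n - k) (m - k)))"

lemma qs_unfold: "n \<noteq> 0 \<Longrightarrow> qs_comparisons n m = bind_pmf (pmf_of_set {1..n}) (qbody n m)"
  by (subst qs_comparisons.simps) (simp add: qbody_def[abs_def])

lemma qs_fin: "finite (set_pmf (qs_comparisons n m))"
proof (induction n arbitrary: m rule: less_induct)
  case (less n)
  show ?case
  proof (cases "n = 0")
    case True then show ?thesis by (subst qs_comparisons.simps) simp
  next
    case False
    have fb: "finite (set_pmf (qbody n m k))" if "k \<in> {1..n}" for k
      using that less.IH[of "k - 1" m] less.IH[of "n - k" "m - k"]
      by (auto simp: qbody_def)
    show ?thesis
      unfolding qs_unfold[OF False] using False fb
      by (auto simp: set_bind_pmf)
  qed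
qed

definition QT :: "nat \<Rightarrow> nat \<Rightarrow> (nat \<Rightarrow> real) \<Rightarrow> nat \<Rightarrow> real" where
  "QT n m F k = (if k = m then F (n - 1)
     else if m < k then measure_pmf.expectation (qs_comparisons (k - 1) m) (\<lambda>c. F (n - 1 + c))
     else measure_pmf.expectation (qs_comparisons (n - k) (m - k)) (\<lambda>c. F (n - 1 + c)))"

lemma qs_exp:
  assumes n: "1 \<le> n"
  shows "measure_pmf.expectation (qs_comparisons n m) F = (\<Sum>k\<in>{1..n}. QT n m F k) / real n"
proof -
  have n0: "n \<noteq> 0" using n by simp
  have fb: "finite (set_pmf (qbody n m k))" for k
    using qs_fin by (auto simp: qbody_def)
  have "measure_pmf.expectation (qs_comparisons n m) F
      = (\<Sum>k\<in>{1..n}. pmf (pmf_of_set {1..n}) k *\<^sub>R measure_pmf.expectation (qbody n m k) F)"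
    unfolding qs_unfold[OF n0] using n0
    by (intro pmf_expectation_bind fb) auto
  also have "\<dots> = (\<Sum>k\<in>{1..n}. QT n m F k / real n)"
    using n0 by (intro sum.cong refl) (auto simp: qbody_def QT_def)
  also have "\<dots> = (\<Sum>k\<in>{1..n}. QT n m F k) / real n"
    by (simp add: sum_divide_distrib)
  finally show ?thesis .
qed

definition EW :: "nat \<Rightarrow> nat \<Rightarrow> (real \<Rightarrow> real) \<Rightarrow> real" where
  "EW n m h = measure_pmf.expectation (qs_comparisons n m) (\<lambda>c. h (real c / real n - 1))"

lemma rescale_eq:
  assumes "1 \<le> n" "0 < j"
  shows "real (n - 1 + c) / real n - 1 = (real j / real n) * ((real c / real j - 1) + 1) - 1 / real n"
proof -
  have "real (n - 1 + c) = real n - 1 + real c" using assms by (simp add: of_nat_diff)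
  then show ?thesis using assms by (simp add: field_simps)
qed

lemma main_ind:
  fixes h :: "real \<Rightarrow> real"
  assumes D: "dickman_law \<mu>"
  shows "1 \<le> m \<Longrightarrow> m \<le> n \<Longrightarrow> L-lipschitz_on UNIV h \<Longrightarrow>
    \<bar>EW n m h - (\<integral>x. h x \<partial>\<mu>)\<bar> \<le> L * PP m n / real n"
proof (induction n arbitrary: m h L rule: less_induct)
  case (less n m h L)
  note m1 = less.prems(1) and mn = less.prems(2) and hl = less.prems(3)
  have n1: "1 \<le> n" using m1 mn by simp
  have rn: "0 < real n" using n1 by simp
  have L0: "0 \<le> L" by (rule lip_nonneg'[OF hl])
  define g where "g = gfun \<mu> h"
  define F where "F c = h (real c / real n - 1)" for c
  define l where "l k = real (k - 1) / real n" for k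
  have gl: "\<bar>g u - g v\<bar> \<le> 2 * L * \<bar>u - v\<bar>" for u v
    unfolding g_def by (rule g_lip[OF D hl])
  have E: "EW n m h = (\<Sum>k\<in>{1..n}. QT n m F k) / real n"
    unfolding EW_def F_def[symmetric] by (rule qs_exp[OF n1])
  have I: "(\<integral>x. h x \<partial>\<mu>) = integral {0..1} g"
    unfolding g_def by (rule g_int[OF D hl])
  have R: "\<bar>integral {0..1} g - (\<Sum>k\<in>{1..n}. g (l k)) / real n\<bar> \<le> 2 * L / real n"
    unfolding g_def l_def by (rule riemann[OF g_lipschitz[OF D hl] n1])
  have branch: "\<bar>QT n m F k - g (l k)\<bar> \<le> L * FF n m k / real n"
    if k: "k \<in> {1..n}" and bk: "k \<noteq> m" for k
  proof -
    define j where "j = (if m < k then k - 1 else n - k)"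
    define m' where "m' = (if m < k then m else m - k)"
    define a where "a = real j / real n"
    define h' where "h' w = h (a * (w + 1) - 1 / real n)" for w
    have j0: "0 < j" and jn: "j < n" and m'1: "1 \<le> m'" and m'j: "m' \<le> j"
      using k bk m1 mn unfolding j_def m'_def by auto
    have a0: "0 \<le> a" "a \<le> 1" unfolding a_def using jn rn by auto
    have QTe: "QT n m F k = EW j m' h'"
    proof -
      have "QT n m F k = measure_pmf.expectation (qs_comparisons j m') (\<lambda>c. F (n - 1 + c))"
        unfolding QT_def j_def m'_def using bk by auto
      also have "\<dots> = EW j m' h'"
        unfolding EW_def h'_def F_def a_def
        by (rule Bochner_Integration.integral_cong[OF refl]) (simp only: rescale_eq[OF n1 j0])
      finally show ?thesis .
    qed
    have h'l: "(L * a)-lipschitz_on UNIV h'"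
      using lip_affine[OF hl, of a "1 / real n"] a0 unfolding h'_def by simp
    have IH: "\<bar>EW j m' h' - (\<integral>x. h' x \<partial>\<mu>)\<bar> \<le> (L * a) * PP m' j / real j"
      by (rule less.IH[OF jn m'1 m'j h'l])
    have IH2: "(L * a) * PP m' j / real j = L * PP m' j / real n"
      unfolding a_def using j0 by simp
    have sh: "\<bar>(\<integral>x. h' x \<partial>\<mu>) - g a\<bar> \<le> L * (1 / real n)"
      using g_shift[OF D hl, of a "1 / real n"] rn unfolding h'_def g_def by simp
    have main: "\<bar>QT n m F k - g a\<bar> \<le> L * (PP m' j + 1) / real n"
    proof -
      have "\<bar>QT n m F k - g a\<bar> \<le> \<bar>EW j m' h' - (\<integral>x. h' x \<partial>\<mu>)\<bar> + \<bar>(\<integral>x. h' x \<partial>\<mu>) - g a\<bar>"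
        unfolding QTe by linarith
      also have "\<dots> \<le> L * PP m' j / real n + L * (1 / real n)"
        using IH IH2 sh by linarith
      also have "\<dots> = L * (PP m' j + 1) / real n" by (simp add: algebra_simps add_divide_distrib)
      finally show ?thesis .
    qed
    show ?thesis
    proof (cases "m < k")
      case True
      have "a = l k" unfolding a_def l_def j_def using True by simp
      moreover have "FF n m k = PP m' j + 1" unfolding FF_def m'_def j_def using True bk by simp
      ultimately show ?thesis using main by simp
    next
      case False
      have "\<bar>g a - g (l k)\<bar> \<le> 2 * L * \<bar>a - l k\<bar>" by (rule gl)
      also have "\<dots> \<le> 2 * L * 1"
      proof -
        have lk: "0 \<le> l k" "l k \<le> 1" unfolding l_def using k rn by (auto simp: divide_le_eq)
        have "\<bar>a - l k\<bar> \<le> 1" using a0 lk by (simp add: abs_le_iff)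
        then show ?thesis using L0 by (intro mult_left_mono) auto
      qed
      finally have ga: "\<bar>g a - g (l k)\<bar> \<le> 2 * L" by simp
      have FFe: "FF n m k = PP m' j + 1 + 2 * real n" unfolding FF_def m'_def j_def using False bk by simp
      have "\<bar>QT n m F k - g (l k)\<bar> \<le> L * (PP m' j + 1) / real n + 2 * L"
        using main ga by linarith
      also have "\<dots> = L * FF n m k / real n" unfolding FFe using rn by (simp add: field_simps)
      finally show ?thesis .
    qed
  qed
  have diag: "\<bar>QT n m F m - g (l m)\<bar> \<le> L * FF n m m / real n"
  proof -
    have q: "QT n m F m = h (- (1 / real n))"
      unfolding QT_def F_def using n1 rn by (simp add: of_nat_diff field_simps)
    have "\<bar>h (- (1 / real n)) - h 0\<bar> \<le> L * \<bar>- (1 / real n) - 0\<bar>" by (rule lipD'[OF hl])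
    then have a1: "\<bar>h (- (1 / real n)) - g 0\<bar> \<le> L / real n"
      unfolding g_def g_zero[OF D] using rn by simp
    have a2: "\<bar>g 0 - g (l m)\<bar> \<le> 2 * L * (real (m - 1) / real n)"
      using gl[of 0 "l m"] rn unfolding l_def by simp
    have "\<bar>QT n m F m - g (l m)\<bar> \<le> L / real n + 2 * L * (real (m - 1) / real n)"
      unfolding q using a1 a2 by linarith
    also have "\<dots> = L * FF n m m / real n"
      unfolding FF_def using m1 rn by (simp add: of_nat_diff field_simps)
    finally show ?thesis .
  qed
  have per: "\<bar>QT n m F k - g (l k)\<bar> \<le> L * FF n m k / real n" if "k \<in> {1..n}" for k
    using branch[OF that] diag by (cases "k = m") auto
  have S: "\<bar>(\<Sum>k\<in>{1..n}. QT n m F k) / real n - (\<Sum>k\<in>{1..n}. g (l k)) / real n\<bar>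
      \<le> L * (\<Sum>k\<in>{1..n}. FF n m k) / (real n * real n)"
  proof -
    have "\<bar>(\<Sum>k\<in>{1..n}. QT n m F k) / real n - (\<Sum>k\<in>{1..n}. g (l k)) / real n\<bar>
        = \<bar>\<Sum>k\<in>{1..n}. QT n m F k - g (l k)\<bar> / real n"
      using rn by (simp add: sum_subtractf diff_divide_distrib[symmetric])
    also have "\<dots> \<le> (\<Sum>k\<in>{1..n}. \<bar>QT n m F k - g (l k)\<bar>) / real n"
      using rn by (intro divide_right_mono sum_abs) auto
    also have "\<dots> \<le> (\<Sum>k\<in>{1..n}. L * FF n m k / real n) / real n"
      using rn per by (intro divide_right_mono sum_mono) auto
    also have "\<dots> = L * (\<Sum>k\<in>{1..n}. FF n m k) / (real n * real n)"
      by (simp add: sum_divide_distrib[symmetric] sum_distrib_left[symmetric])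
    finally show ?thesis .
  qed
  have "\<bar>EW n m h - (\<integral>x. h x \<partial>\<mu>)\<bar> \<le> L * (\<Sum>k\<in>{1..n}. FF n m k) / (real n * real n) + 2 * L / real n"
    unfolding E I using S R by linarith
  also have "\<dots> = L * ((\<Sum>k\<in>{1..n}. FF n m k) + 2 * real n) / (real n * real n)"
    using rn by (simp add: field_simps)
  also have "\<dots> \<le> L * (real n * PP m n) / (real n * real n)"
    using final_ineq[OF m1 mn] L0 rn by (intro divide_right_mono mult_left_mono) auto
  also have "\<dots> = L * PP m n / real n" using rn by simp
  finally show ?case .
qed

theorem theorem1p2:
  fixes m n :: nat and \<mu> :: "real measure"
  assumes "m \<ge> 2" and "n \<ge> m" and "dickman_law \<mu>"
  shows "wasserstein1 (measure_pmf (map_pmf (\<lambda>c. real c / real n - 1) (qs_comparisons n m))) \<mu>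
           \<le> ereal (((46 * real m + 8) * ln (real n / real m) + 54 * real m + 8) / real n)"
  unfolding wasserstein1_def
proof (rule SUP_least)
  fix h :: "real \<Rightarrow> real"
  assume "h \<in> {h :: real \<Rightarrow> real. 1-lipschitz_on UNIV h}"
  then have hl: "1-lipschitz_on UNIV h" by simp
  have m1: "1 \<le> m" using assms by simp
  have "(\<integral>x. h x \<partial>measure_pmf (map_pmf (\<lambda>c. real c / real n - 1) (qs_comparisons n m))) = EW n m h"
    unfolding EW_def by simp
  moreover have "\<bar>EW n m h - (\<integral>x. h x \<partial>\<mu>)\<bar> \<le> 1 * PP m n / real n"
    by (rule main_ind[OF assms(3) m1 assms(2) hl])
  ultimately show "ereal \<bar>(\<integral>x. h x \<partial>measure_pmf (map_pmf (\<lambda>c. real c / real n - 1) (qs_comparisons n m))) - (\<integral>x. h x \<partial>\<mu>)\<bar>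
      \<le> ereal (((46 * real m + 8) * ln (real n / real m) + 54 * real m + 8) / real n)"
    by (simp add: PP_def)
qed

end
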